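(* Let $(N_m)_{m\ge0}$ be positive integers with $N_0=N$, for each $m\ge1$ let $W_m:\mathbb{R}^{N_{m-1}}\to\mathbb{C}^{N_m}$ be linear with $W_m^*W_m=\mathrm{Id}$, and for each $m\ge0$ let $A_m$ be a block-averaging operator on $\mathbb{R}^{N_m}$. Let $X$ be a random vector in $\mathbb{R}^N$ with $E(\|X\|^2)<\infty$, let $(X_m)_{m\ge0}$ be its expected scattering layers and let $(\tilde X_m)_{m\ge0}$ be its averaged scattering layers (computed realization-wise, with the same $W_m$ and the $A_m$). Then for every $m\ge0$, $$E\big(\|A_m\tilde X_m-E(X_m)\|^2\big)\le\Big(\sum_{n=0}^m E\big(\|A_nX_n-E(X_n)\|^2\big)^{1/2}\Big)^2.$$
   Context: For $z\in\mathbb{C}^n$, $|z|$ denotes the vector of coordinatewise complex moduli; $\|\cdot\|$ is the Euclidean norm. Expected scattering layers: $X_0=X$, $X_{m+1}=|W_{m+1}(X_m-E(X_m))|$. A block-averaging operator $A_m$ on $\mathbb{R}^{N_m}$ is associated with a partition $\{B_{j,m}\}_j$ of $\{1,\dots,N_m\}$ into nonempty blocks, and is defined by $(A_mv)(n)=\frac{1}{|B_{j,m}|}\sum_{k\in B_{j,m}}v(k)$ for $n\in B_{j,m}$. Averaged scattering layers: $\tilde X_0=X$, $\tilde X_{m+1}=|W_{m+1}(\tilde X_m-A_m\tilde X_m)|$. *)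

theory Defs
  imports "HOL-Probability.Probability" "HOL-Library.Disjoint_Sets"
begin

text \<open>Vectors in R^n / C^n are represented as functions on nat; only the
coordinates below n are relevant.  A real-linear map W : R^n -> C^N is
represented by its complex matrix (W i k), i < N, k < n.\<close>

definition sqnorm :: "nat \<Rightarrow> (nat \<Rightarrow> real) \<Rightarrow> real" where
  "sqnorm n v = (\<Sum>k<n. (v k)\<^sup>2)"

definition apply_mat :: "nat \<Rightarrow> nat \<Rightarrow> (nat \<Rightarrow> nat \<Rightarrow> complex) \<Rightarrow> (nat \<Rightarrow> real) \<Rightarrow> nat \<Rightarrow> complex" where
  "apply_mat n Nout W v = (\<lambda>i. if i < Nout then (\<Sum>k<n. W i k * complex_of_real (v k)) else 0)"

text \<open>W^* W = Id, with W^* the adjoint of the real-linear map W : R^n -> C^N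
(C^N carrying the real inner product Re (sum z_i * cnj w_i)).\<close>
definition adj_isometry :: "nat \<Rightarrow> nat \<Rightarrow> (nat \<Rightarrow> nat \<Rightarrow> complex) \<Rightarrow> bool" where
  "adj_isometry n Nout W \<longleftrightarrow>
     (\<forall>k<n. \<forall>l<n. Re (\<Sum>i<Nout. cnj (W i k) * W i l) = (if k = l then 1 else 0))"

definition block_avg :: "nat \<Rightarrow> nat set set \<Rightarrow> (nat \<Rightarrow> real) \<Rightarrow> nat \<Rightarrow> real" where
  "block_avg n P v = (\<lambda>i. if i < n then
       (let B = (THE B. B \<in> P \<and> i \<in> B) in (\<Sum>k\<in>B. v k) / real (card B)) else 0)"

definition vexp :: "'a measure \<Rightarrow> ('a \<Rightarrow> nat \<Rightarrow> real) \<Rightarrow> nat \<Rightarrow> real" where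
  "vexp M Y = (\<lambda>k. integral\<^sup>L M (\<lambda>\<omega>. Y \<omega> k))"

fun exp_scat :: "'a measure \<Rightarrow> (nat \<Rightarrow> nat) \<Rightarrow> (nat \<Rightarrow> nat \<Rightarrow> nat \<Rightarrow> complex)
    \<Rightarrow> ('a \<Rightarrow> nat \<Rightarrow> real) \<Rightarrow> nat \<Rightarrow> 'a \<Rightarrow> nat \<Rightarrow> real" where
  "exp_scat M N W X 0 = X"
| "exp_scat M N W X (Suc m) =
     (\<lambda>\<omega> i. cmod (apply_mat (N m) (N (Suc m)) (W (Suc m))
        (\<lambda>k. exp_scat M N W X m \<omega> k - vexp M (exp_scat M N W X m) k) i))"

fun avg_scat :: "(nat \<Rightarrow> nat) \<Rightarrow> (nat \<Rightarrow> nat \<Rightarrow> nat \<Rightarrow> complex) \<Rightarrow> (nat \<Rightarrow> nat set set)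
    \<Rightarrow> ('a \<Rightarrow> nat \<Rightarrow> real) \<Rightarrow> nat \<Rightarrow> 'a \<Rightarrow> nat \<Rightarrow> real" where
  "avg_scat N W P X 0 = X"
| "avg_scat N W P X (Suc m) =
     (\<lambda>\<omega> i. cmod (apply_mat (N m) (N (Suc m)) (W (Suc m))
        (\<lambda>k. avg_scat N W P X m \<omega> k - block_avg (N m) (P m) (avg_scat N W P X m \<omega>) k) i))"

end

theory Submission
  imports Defs
begin


lemma real_aux:
  fixes a b X :: real
  assumes a: "a \<ge> 0" and b: "b \<ge> 0"
    and H: "\<And>t. t > 0 \<Longrightarrow> X \<le> (1+t)*a\<^sup>2 + (1+1/t)*b\<^sup>2"
  shows "X \<le> (a+b)\<^sup>2"
proof (cases "a > 0 \<and> b > 0")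
  case True
  have "X \<le> (1+b/a)*a\<^sup>2 + (1+1/(b/a))*b\<^sup>2" using H[of "b/a"] True by simp
  also have "\<dots> = (a+b)\<^sup>2" using True by (simp add: field_simps power2_eq_square)
  finally show ?thesis .
next
  case False
  show ?thesis
  proof (rule ccontr)
    assume nx: "\<not> X \<le> (a+b)\<^sup>2"
    show False
    proof (cases "a = 0")
      case True
      then have "X \<le> (1+1/t)*b\<^sup>2" if "t>0" for t using H[OF that] by simp
      show False
      proof (cases "b = 0")
        case True thus False using H[of 1] nx \<open>a=0\<close> by simp
      next
        case False
        have bp: "b\<^sup>2 > 0" using False b by simp
        define t where "t = 2*b\<^sup>2/(X - b\<^sup>2)"
        have Xg: "X - b\<^sup>2 > 0" using nx True by simp
        have tp: "t > 0" unfolding t_def using Xg bp by simp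
        have "X \<le> (1+1/t)*b\<^sup>2" using H[OF tp] True by simp
        also have "\<dots> = b\<^sup>2 + (X - b\<^sup>2)/2" unfolding t_def using Xg bp by (simp add: field_simps)
        finally have "X \<le> b\<^sup>2 + (X - b\<^sup>2)/2" . then show False using Xg by (simp add: field_simps)
      qed
    next
      case an: False
      then have "b = 0" using False a b by auto
      have ap: "a\<^sup>2 > 0" using an a by simp
      define t where "t = (X - a\<^sup>2)/(2*a\<^sup>2)"
      have Xg: "X - a\<^sup>2 > 0" using nx \<open>b=0\<close> by simp
      have tp: "t > 0" unfolding t_def using Xg ap by simp
      have "X \<le> (1+t)*a\<^sup>2" using H[OF tp] \<open>b=0\<close> by simp
      also have "\<dots> = a\<^sup>2 + (X - a\<^sup>2)/2" unfolding t_def using Xg ap by (simp add: field_simps)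
      finally have "X \<le> a\<^sup>2 + (X - a\<^sup>2)/2" . then show False using Xg by (simp add: field_simps)
    qed
  qed
qed

lemma mink:
  fixes f g h :: "'a \<Rightarrow> real"
  assumes [measurable]: "f \<in> borel_measurable M" "g \<in> borel_measurable M" "h \<in> borel_measurable M"
    and pos: "\<And>x. 0 \<le> f x" "\<And>x. 0 \<le> g x" "\<And>x. 0 \<le> h x"
    and le: "\<And>x. h x \<le> f x + g x"
    and fi: "integrable M (\<lambda>x. (f x)\<^sup>2)" and gi: "integrable M (\<lambda>x. (g x)\<^sup>2)"
  shows "integrable M (\<lambda>x. (h x)\<^sup>2)"
    "sqrt (integral\<^sup>L M (\<lambda>x. (h x)\<^sup>2)) \<le> sqrt (integral\<^sup>L M (\<lambda>x. (f x)\<^sup>2)) + sqrt (integral\<^sup>L M (\<lambda>x. (g x)\<^sup>2))"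
proof -
  have pw: "(h x)\<^sup>2 \<le> (1+t)*(f x)\<^sup>2 + (1+1/t)*(g x)\<^sup>2" if "t > 0" for x t
  proof -
    have "(h x)\<^sup>2 \<le> (f x + g x)\<^sup>2" using le[of x] pos[of x] by (simp add: power_mono)
    moreover have "2 * f x * g x \<le> t * (f x)\<^sup>2 + (g x)\<^sup>2 / t"
    proof -
      have "0 \<le> (t * f x - g x)\<^sup>2 / t" using that by simp
      also have "\<dots> = t * (f x)\<^sup>2 + (g x)\<^sup>2 / t - 2 * f x * g x" using that
        by (simp add: field_simps power2_eq_square)
      finally show ?thesis by simp
    qed
    ultimately show ?thesis by (simp add: power2_sum algebra_simps)
  qed
  show hi: "integrable M (\<lambda>x. (h x)\<^sup>2)"
    by (rule Bochner_Integration.integrable_bound[where f="\<lambda>x. (1+1)*(f x)\<^sup>2 + (1+1/1)*(g x)\<^sup>2"])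
       (use fi gi pw[of 1] in auto)
  define a where "a = sqrt (integral\<^sup>L M (\<lambda>x. (f x)\<^sup>2))"
  define b where "b = sqrt (integral\<^sup>L M (\<lambda>x. (g x)\<^sup>2))"
  have fa: "integral\<^sup>L M (\<lambda>x. (f x)\<^sup>2) = a\<^sup>2" unfolding a_def by simp
  have gb: "integral\<^sup>L M (\<lambda>x. (g x)\<^sup>2) = b\<^sup>2" unfolding b_def by simp
  have "integral\<^sup>L M (\<lambda>x. (h x)\<^sup>2) \<le> (a+b)\<^sup>2"
  proof (rule real_aux)
    show "a \<ge> 0" "b \<ge> 0" unfolding a_def b_def by simp_all
    fix t :: real assume t: "t > 0"
    have "integral\<^sup>L M (\<lambda>x. (h x)\<^sup>2) \<le> integral\<^sup>L M (\<lambda>x. (1+t)*(f x)\<^sup>2 + (1+1/t)*(g x)\<^sup>2)"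
      by (rule integral_mono) (use hi fi gi pw t in auto)
    also have "\<dots> = (1+t)*a\<^sup>2 + (1+1/t)*b\<^sup>2"
      using fi gi by (simp add: fa gb)
    finally show "integral\<^sup>L M (\<lambda>x. (h x)\<^sup>2) \<le> (1+t)*a\<^sup>2 + (1+1/t)*b\<^sup>2" .
  qed
  then have "sqrt (integral\<^sup>L M (\<lambda>x. (h x)\<^sup>2)) \<le> sqrt ((a+b)\<^sup>2)" by (rule real_sqrt_le_mono)
  also have "\<dots> = a + b" unfolding a_def b_def by simp
  finally show "sqrt (integral\<^sup>L M (\<lambda>x. (h x)\<^sup>2)) \<le> sqrt (integral\<^sup>L M (\<lambda>x. (f x)\<^sup>2)) + sqrt (integral\<^sup>L M (\<lambda>x. (g x)\<^sup>2))"
    unfolding a_def b_def .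
qed




definition nrm :: "nat \<Rightarrow> (nat \<Rightarrow> real) \<Rightarrow> real" where
  "nrm n v = sqrt (sqnorm n v)"

lemma nrm_L2: "nrm n v = L2_set v {..<n}"
  by (simp add: nrm_def sqnorm_def L2_set_def)

lemma nrm_tri: "nrm n (\<lambda>k. u k + v k) \<le> nrm n u + nrm n v"
  unfolding nrm_L2 by (rule L2_set_triangle_ineq)

lemma nrm_cong: assumes "\<And>k. k < n \<Longrightarrow> u k = v k" shows "nrm n u = nrm n v"
  unfolding nrm_def sqnorm_def using assms by (intro arg_cong[where f=sqrt] sum.cong) auto

lemma nrm_uminus: "nrm n (\<lambda>k. - v k) = nrm n v"
  unfolding nrm_def sqnorm_def by simp

lemma nrm_nonneg: "nrm n v \<ge> 0"
  unfolding nrm_def sqnorm_def by (simp add: sum_nonneg)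

lemma sqnorm_nonneg: "sqnorm n v \<ge> 0"
  unfolding sqnorm_def by (simp add: sum_nonneg)

lemma nrm_sq: "(nrm n v)\<^sup>2 = sqnorm n v"
  unfolding nrm_def using sqnorm_nonneg by simp

lemma the_block:
  assumes P: "partition_on {..<n} P" and B: "B \<in> P" and k: "k \<in> B"
  shows "(THE B'. B' \<in> P \<and> k \<in> B') = B"
proof (rule the_equality)
  show "B \<in> P \<and> k \<in> B" using B k by simp
  fix B' assume "B' \<in> P \<and> k \<in> B'"
  then show "B' = B" using partition_onD2[OF P] B k by (auto dest: disjointD)
qed

lemma block_ex:
  assumes P: "partition_on {..<n} P" and i: "i < n"
  shows "\<exists>B. B \<in> P \<and> i \<in> B"
  using partition_onD1[OF P] i by auto

lemma block_props:
  fixes n :: nat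
  assumes P: "partition_on {..<n} P" and i: "i < n"
  defines "B \<equiv> (THE B. B \<in> P \<and> i \<in> B)"
  shows "B \<in> P" "i \<in> B" "B \<subseteq> {..<n}" "finite B" "card B > 0"
proof -
  obtain B0 where B0: "B0 \<in> P" "i \<in> B0" using block_ex[OF P i] by blast
  have "B = B0" unfolding B_def by (rule the_block[OF P B0])
  then show "B \<in> P" "i \<in> B" using B0 by auto
  then show s: "B \<subseteq> {..<n}" using partition_onD1[OF P] by auto
  then show "finite B" by (rule finite_subset[OF _ finite_lessThan])
  then show "card B > 0" using \<open>i \<in> B\<close> by (auto simp: card_gt_0_iff)
qed



lemma block_avg_diff:
  "block_avg n P (\<lambda>k. u k - v k) i = block_avg n P u i - block_avg n P v i"
  unfolding block_avg_def Let_def by (simp add: sum_subtractf diff_divide_distrib)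



lemma pyth:
  assumes P: "partition_on {..<n} P"
  shows "sqnorm n (block_avg n P w) + sqnorm n (\<lambda>k. w k - block_avg n P w k) = sqnorm n w"
proof -
  define f where "f k = (block_avg n P w k)\<^sup>2 + (w k - block_avg n P w k)\<^sup>2 - (w k)\<^sup>2" for k
  have U: "{..<n} = \<Union>P" using partition_onD1[OF P] .
  have fin: "\<forall>A\<in>P. finite A" using U by (metis Union_upper finite_lessThan finite_subset)
  have dis: "\<forall>A\<in>P. \<forall>B\<in>P. A \<noteq> B \<longrightarrow> A \<inter> B = {}"
    using partition_onD2[OF P] by (auto dest: disjointD)
  have "sum f {..<n} = sum (sum f) P"
    unfolding U using sum.Union_disjoint[OF fin dis, of f] by simp
  also have "\<dots> = 0"
  proof (rule sum.neutral, rule ballI)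
    fix B assume B: "B \<in> P"
    define mu where "mu = (\<Sum>k\<in>B. w k) / real (card B)"
    have Bsub: "B \<subseteq> {..<n}" using B U by auto
    have fB: "finite B" using fin B by auto
    have "B \<noteq> {}" using partition_onD3[OF P] B by auto
    then have cB: "card B > 0" using fB card_gt_0_iff by blast
    have A: "block_avg n P w k = mu" if "k \<in> B" for k
      using the_block[OF P B that] Bsub that unfolding block_avg_def mu_def Let_def by auto
    have "sum f B = (\<Sum>k\<in>B. 2 * mu\<^sup>2 - 2 * mu * w k)"
      by (rule sum.cong) (auto simp: f_def A power2_eq_square algebra_simps)
    also have "\<dots> = 2 * real (card B) * mu\<^sup>2 - 2 * mu * (\<Sum>k\<in>B. w k)"
      by (simp add: sum_subtractf sum_distrib_left)
    also have "(\<Sum>k\<in>B. w k) = real (card B) * mu" unfolding mu_def using cB by simp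
    finally show "sum f B = 0" by (simp add: power2_eq_square)
  qed
  finally have "sum f {..<n} = 0" .
  then show ?thesis unfolding sqnorm_def f_def
    by (simp add: sum.distrib sum_subtractf)
qed



lemma nrm_avg_le: "partition_on {..<n} P \<Longrightarrow> nrm n (block_avg n P w) \<le> nrm n w"
  unfolding nrm_def using pyth[of n P w] sqnorm_nonneg[of n "\<lambda>k. w k - block_avg n P w k"] by simp

lemma nrm_res_le: "partition_on {..<n} P \<Longrightarrow> nrm n (\<lambda>k. w k - block_avg n P w k) \<le> nrm n w"
  unfolding nrm_def using pyth[of n P w] sqnorm_nonneg[of n "block_avg n P w"] by simp

lemma apply_mat_diff:
  "apply_mat n Nout W (\<lambda>k. u k - v k) i = apply_mat n Nout W u i - apply_mat n Nout W v i"
  unfolding apply_mat_def by (simp add: sum_subtractf algebra_simps)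





lemma sq_sum_c:
  fixes a :: "nat \<Rightarrow> complex"
  shows "(\<Sum>k<n. a k) * cnj (\<Sum>l<n. a l) = (\<Sum>k<n. \<Sum>l<n. a k * cnj (a l))"
  by (simp add: cnj_sum sum_product)

lemma iso:
  assumes "adj_isometry n Nout W"
  shows "sqnorm Nout (\<lambda>i. cmod (apply_mat n Nout W v i)) = sqnorm n v"
proof -
  have "complex_of_real (sqnorm Nout (\<lambda>i. cmod (apply_mat n Nout W v i)))
      = (\<Sum>i<Nout. (\<Sum>k<n. W i k * of_real (v k)) * cnj (\<Sum>l<n. W i l * of_real (v l)))"
    unfolding sqnorm_def apply_mat_def of_real_sum
    by (intro sum.cong refl) (simp add: complex_norm_square del: of_real_power)
  also have "\<dots> = (\<Sum>i<Nout. \<Sum>k<n. \<Sum>l<n. of_real (v k * v l) * (cnj (W i l) * W i k))"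
    unfolding sq_sum_c
    by (intro sum.cong refl) (simp add: mult_ac)
  also have "\<dots> = (\<Sum>k<n. \<Sum>i<Nout. \<Sum>l<n. of_real (v k * v l) * (cnj (W i l) * W i k))"
    by (rule sum.swap)
  also have "\<dots> = (\<Sum>k<n. \<Sum>l<n. \<Sum>i<Nout. of_real (v k * v l) * (cnj (W i l) * W i k))"
    by (intro sum.cong refl sum.swap)
  also have "\<dots> = (\<Sum>k<n. \<Sum>l<n. of_real (v k * v l) * (\<Sum>i<Nout. cnj (W i l) * W i k))"
    by (simp only: sum_distrib_left)
  finally have "sqnorm Nout (\<lambda>i. cmod (apply_mat n Nout W v i))
      = Re (\<Sum>k<n. \<Sum>l<n. of_real (v k * v l) * (\<Sum>i<Nout. cnj (W i l) * W i k))"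
    by (metis Re_complex_of_real)
  also have "\<dots> = (\<Sum>k<n. \<Sum>l<n. v k * v l * Re (\<Sum>i<Nout. cnj (W i l) * W i k))"
    by (simp add: Re_sum)
  also have "\<dots> = (\<Sum>k<n. \<Sum>l<n. if l = k then v k * v l else 0)"
    using assms unfolding adj_isometry_def by (intro sum.cong refl) simp
  also have "\<dots> = sqnorm n v" unfolding sqnorm_def by (simp add: power2_eq_square)
  finally show ?thesis .
qed



lemma absdiff:
  assumes "adj_isometry n Nout W"
  shows "nrm Nout (\<lambda>i. cmod (apply_mat n Nout W u i) - cmod (apply_mat n Nout W v i))
         \<le> nrm n (\<lambda>k. u k - v k)"
proof -
  have "sqnorm Nout (\<lambda>i. cmod (apply_mat n Nout W u i) - cmod (apply_mat n Nout W v i))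
     \<le> sqnorm Nout (\<lambda>i. cmod (apply_mat n Nout W (\<lambda>k. u k - v k) i))"
    unfolding sqnorm_def
  proof (rule sum_mono)
    fix i
    have "\<bar>cmod (apply_mat n Nout W u i) - cmod (apply_mat n Nout W v i)\<bar>
        \<le> cmod (apply_mat n Nout W (\<lambda>k. u k - v k) i)"
      unfolding apply_mat_diff by (rule norm_triangle_ineq3)
    then show "(cmod (apply_mat n Nout W u i) - cmod (apply_mat n Nout W v i))\<^sup>2
        \<le> (cmod (apply_mat n Nout W (\<lambda>k. u k - v k) i))\<^sup>2"
      by (metis abs_le_square_iff abs_norm_cancel)
  qed
  also have "\<dots> = sqnorm n (\<lambda>k. u k - v k)" by (rule iso[OF assms])
  finally show ?thesis unfolding nrm_def by simp
qed

lemma sqnorm_diff_le: "sqnorm n (\<lambda>k. u k - v k) \<le> 2 * sqnorm n u + 2 * sqnorm n v"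
proof -
  have "(\<Sum>k<n. (u k - v k)\<^sup>2) \<le> (\<Sum>k<n. 2 * (u k)\<^sup>2 + 2 * (v k)\<^sup>2)"
  proof (rule sum_mono)
    fix k
    have "0 \<le> (u k + v k)\<^sup>2" by simp
    then show "(u k - v k)\<^sup>2 \<le> 2 * (u k)\<^sup>2 + 2 * (v k)\<^sup>2"
      by (simp add: power2_eq_square algebra_simps)
  qed
  then show ?thesis unfolding sqnorm_def by (simp add: sum.distrib sum_distrib_left)
qed

lemma meas_sqnorm:
  assumes "\<And>k. k < n \<Longrightarrow> (\<lambda>\<omega>. Z \<omega> k) \<in> borel_measurable M"
  shows "(\<lambda>\<omega>. sqnorm n (Z \<omega>)) \<in> borel_measurable M"
  unfolding sqnorm_def using assms by (intro borel_measurable_sum borel_measurable_power) auto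

lemma meas_nrm:
  assumes "\<And>k. k < n \<Longrightarrow> (\<lambda>\<omega>. Z \<omega> k) \<in> borel_measurable M"
  shows "(\<lambda>\<omega>. nrm n (Z \<omega>)) \<in> borel_measurable M"
  unfolding nrm_def using meas_sqnorm[OF assms] by measurable

lemma meas_avg:
  fixes n :: nat
  assumes P: "partition_on {..<n} P"
    and Z: "\<And>k. k < n \<Longrightarrow> (\<lambda>\<omega>. Z \<omega> k) \<in> borel_measurable M"
  shows "(\<lambda>\<omega>. block_avg n P (Z \<omega>) i) \<in> borel_measurable M"
proof (cases "i < n")
  case True
  define B where "B = (THE B. B \<in> P \<and> i \<in> B)"
  have Bs: "B \<subseteq> {..<n}" unfolding B_def by (rule block_props(3)[OF P True])
  have "(\<lambda>\<omega>. block_avg n P (Z \<omega>) i) = (\<lambda>\<omega>. (\<Sum>k\<in>B. Z \<omega> k) / real (card B))"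
    unfolding block_avg_def Let_def B_def using True by simp
  also have "\<dots> \<in> borel_measurable M"
    using Z Bs by (intro borel_measurable_divide borel_measurable_sum) auto
  finally show ?thesis .
next
  case False
  then show ?thesis unfolding block_avg_def by simp
qed

lemma meas_layer:
  assumes Z: "\<And>k. k < n \<Longrightarrow> (\<lambda>\<omega>. Z \<omega> k) \<in> borel_measurable M"
    and Q: "\<And>k. k < n \<Longrightarrow> (\<lambda>\<omega>. Q \<omega> k) \<in> borel_measurable M"
  shows "(\<lambda>\<omega>. cmod (apply_mat n Nout W (\<lambda>k. Z \<omega> k - Q \<omega> k) i)) \<in> borel_measurable M"
proof (cases "i < Nout")
  case True
  have "(\<lambda>\<omega>. \<Sum>k<n. W i k * complex_of_real (Z \<omega> k - Q \<omega> k)) \<in> borel_measurable M"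
  proof (intro borel_measurable_sum)
    fix k assume "k \<in> {..<n}"
    then have [measurable]: "(\<lambda>\<omega>. Z \<omega> k) \<in> borel_measurable M" "(\<lambda>\<omega>. Q \<omega> k) \<in> borel_measurable M"
      using Z Q by auto
    show "(\<lambda>\<omega>. W i k * complex_of_real (Z \<omega> k - Q \<omega> k)) \<in> borel_measurable M" by measurable
  qed
  then show ?thesis unfolding apply_mat_def using True by measurable
next
  case False
  then show ?thesis unfolding apply_mat_def by simp
qed



theorem proposition1:
  fixes M :: "'a measure" and N :: "nat \<Rightarrow> nat"
    and W :: "nat \<Rightarrow> nat \<Rightarrow> nat \<Rightarrow> complex" and P :: "nat \<Rightarrow> nat set set"
    and X :: "'a \<Rightarrow> nat \<Rightarrow> real" and m :: nat
  assumes "prob_space M"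
    and Npos: "\<And>j. N j > 0"
    and Wiso: "\<And>j. j \<ge> 1 \<Longrightarrow> adj_isometry (N (j - 1)) (N j) (W j)"
    and Ppart: "\<And>j. partition_on {..<N j} (P j)"
    and Xmeas: "\<And>k. k < N 0 \<Longrightarrow> (\<lambda>\<omega>. X \<omega> k) \<in> borel_measurable M"
    and Xsq: "integrable M (\<lambda>\<omega>. sqnorm (N 0) (X \<omega>))"
  shows "integral\<^sup>L M (\<lambda>\<omega>. sqnorm (N m)
            (\<lambda>k. block_avg (N m) (P m) (avg_scat N W P X m \<omega>) k
                 - vexp M (exp_scat M N W X m) k))
    \<le> (\<Sum>n\<le>m. sqrt (integral\<^sup>L M (\<lambda>\<omega>. sqnorm (N n)
            (\<lambda>k. block_avg (N n) (P n) (exp_scat M N W X n \<omega>) k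
                 - vexp M (exp_scat M N W X n) k))))\<^sup>2"
proof -
  interpret prob_space M by fact
  define Xs where "Xs = exp_scat M N W X"
  define Y where "Y = avg_scat N W P X"
  define c where "c n = vexp M (Xs n)" for n
  define A where "A n = block_avg (N n) (P n)" for n
  define a where "a n \<omega> = nrm (N n) (\<lambda>k. A n (Xs n \<omega>) k - c n k)" for n \<omega>
  define e where "e n \<omega> = nrm (N n) (\<lambda>k. Y n \<omega> k - Xs n \<omega> k)" for n \<omega>
  have Wi: "adj_isometry (N n) (N (Suc n)) (W (Suc n))" for n using Wiso[of "Suc n"] by simp
  have XsS: "Xs (Suc n) = (\<lambda>\<omega> i. cmod (apply_mat (N n) (N (Suc n)) (W (Suc n))
        (\<lambda>k. Xs n \<omega> k - c n k) i))" for n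
    unfolding Xs_def c_def by simp
  have YS: "Y (Suc n) = (\<lambda>\<omega> i. cmod (apply_mat (N n) (N (Suc n)) (W (Suc n))
        (\<lambda>k. Y n \<omega> k - A n (Y n \<omega>) k) i))" for n
    unfolding Y_def A_def by simp
  have MX: "\<And>k. k < N n \<Longrightarrow> (\<lambda>\<omega>. Xs n \<omega> k) \<in> borel_measurable M" for n
  proof (induction n)
    case 0 then show ?case using Xmeas unfolding Xs_def by simp
  next
    case (Suc n) show ?case unfolding XsS
      by (rule meas_layer[where Q="\<lambda>_. c n"]) (use Suc.IH in auto)
  qed
  have MY: "\<And>k. k < N n \<Longrightarrow> (\<lambda>\<omega>. Y n \<omega> k) \<in> borel_measurable M" for n
  proof (induction n)
    case 0 then show ?case using Xmeas unfolding Y_def by simp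
  next
    case (Suc n) show ?case unfolding YS
      by (rule meas_layer[where Q="\<lambda>\<omega>. A n (Y n \<omega>)"])
         (use Suc.IH in \<open>auto simp: A_def intro: meas_avg[OF Ppart]\<close>)
  qed
  have IX: "integrable M (\<lambda>\<omega>. sqnorm (N n) (Xs n \<omega>))" for n
  proof (induction n)
    case 0 then show ?case using Xsq unfolding Xs_def by simp
  next
    case (Suc n)
    show ?case
    proof (rule Bochner_Integration.integrable_bound[where f="\<lambda>\<omega>. 2 * sqnorm (N n) (Xs n \<omega>) + 2 * sqnorm (N n) (c n)"])
      show "integrable M (\<lambda>\<omega>. 2 * sqnorm (N n) (Xs n \<omega>) + 2 * sqnorm (N n) (c n))"
        using Suc.IH by (intro Bochner_Integration.integrable_add integrable_mult_right) auto
      show "(\<lambda>\<omega>. sqnorm (N (Suc n)) (Xs (Suc n) \<omega>)) \<in> borel_measurable M"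
        by (rule meas_sqnorm[OF MX])
      show "AE \<omega> in M. norm (sqnorm (N (Suc n)) (Xs (Suc n) \<omega>))
          \<le> norm (2 * sqnorm (N n) (Xs n \<omega>) + 2 * sqnorm (N n) (c n))"
      proof (rule AE_I2)
        fix \<omega>
        have "sqnorm (N (Suc n)) (Xs (Suc n) \<omega>) = sqnorm (N n) (\<lambda>k. Xs n \<omega> k - c n k)"
          unfolding XsS by (rule iso[OF Wi])
        also have "\<dots> \<le> 2 * sqnorm (N n) (Xs n \<omega>) + 2 * sqnorm (N n) (c n)"
          by (rule sqnorm_diff_le)
        finally show "norm (sqnorm (N (Suc n)) (Xs (Suc n) \<omega>))
          \<le> norm (2 * sqnorm (N n) (Xs n \<omega>) + 2 * sqnorm (N n) (c n))"
          using sqnorm_nonneg[of "N (Suc n)"] sqnorm_nonneg[of "N n"] by simp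
      qed
    qed
  qed
  have Ma: "a n \<in> borel_measurable M" for n
    unfolding a_def A_def
    by (rule meas_nrm[where Z="\<lambda>\<omega> k. block_avg (N n) (P n) (Xs n \<omega>) k - c n k"])
       (use MX in \<open>auto intro!: borel_measurable_diff meas_avg[OF Ppart]\<close>)
  have Me: "e n \<in> borel_measurable M" for n
    unfolding e_def
    by (rule meas_nrm[where Z="\<lambda>\<omega> k. Y n \<omega> k - Xs n \<omega> k"]) (use MX MY in auto)
  have Ia: "integrable M (\<lambda>\<omega>. (a n \<omega>)\<^sup>2)" for n
  proof (rule Bochner_Integration.integrable_bound[where f="\<lambda>\<omega>. 2 * sqnorm (N n) (Xs n \<omega>) + 2 * sqnorm (N n) (c n)"])
    show "integrable M (\<lambda>\<omega>. 2 * sqnorm (N n) (Xs n \<omega>) + 2 * sqnorm (N n) (c n))"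
      using IX[of n] by (intro Bochner_Integration.integrable_add integrable_mult_right) auto
    show "(\<lambda>\<omega>. (a n \<omega>)\<^sup>2) \<in> borel_measurable M" using Ma[of n] by measurable
    show "AE \<omega> in M. norm ((a n \<omega>)\<^sup>2) \<le> norm (2 * sqnorm (N n) (Xs n \<omega>) + 2 * sqnorm (N n) (c n))"
    proof (rule AE_I2)
      fix \<omega>
      have "(a n \<omega>)\<^sup>2 = sqnorm (N n) (\<lambda>k. A n (Xs n \<omega>) k - c n k)" unfolding a_def nrm_sq ..
      also have "\<dots> \<le> 2 * sqnorm (N n) (A n (Xs n \<omega>)) + 2 * sqnorm (N n) (c n)"
        by (rule sqnorm_diff_le)
      also have "sqnorm (N n) (A n (Xs n \<omega>)) \<le> sqnorm (N n) (Xs n \<omega>)"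
        using pyth[OF Ppart[of n], of "Xs n \<omega>"] sqnorm_nonneg[of "N n" "\<lambda>k. Xs n \<omega> k - A n (Xs n \<omega>) k"]
        unfolding A_def by linarith
      finally show "norm ((a n \<omega>)\<^sup>2) \<le> norm (2 * sqnorm (N n) (Xs n \<omega>) + 2 * sqnorm (N n) (c n))"
        using sqnorm_nonneg[of "N n"] by simp
    qed
  qed
  have S1: "nrm (N n) (\<lambda>k. A n (Y n \<omega>) k - c n k) \<le> e n \<omega> + a n \<omega>" for n \<omega>
  proof -
    have "nrm (N n) (\<lambda>k. A n (Y n \<omega>) k - c n k)
        = nrm (N n) (\<lambda>k. A n (\<lambda>j. Y n \<omega> j - Xs n \<omega> j) k + (A n (Xs n \<omega>) k - c n k))"
      unfolding A_def block_avg_diff by simp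
    also have "\<dots> \<le> nrm (N n) (A n (\<lambda>j. Y n \<omega> j - Xs n \<omega> j)) + a n \<omega>"
      unfolding a_def by (rule nrm_tri)
    also have "nrm (N n) (A n (\<lambda>j. Y n \<omega> j - Xs n \<omega> j)) \<le> e n \<omega>"
      unfolding e_def A_def by (rule nrm_avg_le[OF Ppart])
    finally show ?thesis by simp
  qed
  have S2: "e (Suc n) \<omega> \<le> e n \<omega> + a n \<omega>" for n \<omega>
  proof -
    define D where "D = (\<lambda>j. Y n \<omega> j - Xs n \<omega> j)"
    have "e (Suc n) \<omega> \<le> nrm (N n) (\<lambda>k. (Y n \<omega> k - A n (Y n \<omega>) k) - (Xs n \<omega> k - c n k))"
      unfolding e_def XsS YS by (rule absdiff[OF Wi])
    also have "\<dots> = nrm (N n) (\<lambda>k. (D k - A n D k) + - (A n (Xs n \<omega>) k - c n k))"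
      unfolding D_def A_def block_avg_diff by (simp add: algebra_simps)
    also have "\<dots> \<le> nrm (N n) (\<lambda>k. D k - A n D k) + nrm (N n) (\<lambda>k. - (A n (Xs n \<omega>) k - c n k))"
      by (rule nrm_tri)
    also have "nrm (N n) (\<lambda>k. - (A n (Xs n \<omega>) k - c n k)) = a n \<omega>"
      unfolding a_def by (rule nrm_uminus)
    also have "nrm (N n) (\<lambda>k. D k - A n D k) \<le> e n \<omega>"
      unfolding e_def D_def[symmetric] A_def by (rule nrm_res_le[OF Ppart])
    finally show ?thesis by simp
  qed
  have E: "integrable M (\<lambda>\<omega>. (e n \<omega>)\<^sup>2) \<and>
      sqrt (integral\<^sup>L M (\<lambda>\<omega>. (e n \<omega>)\<^sup>2)) \<le> (\<Sum>j<n. sqrt (integral\<^sup>L M (\<lambda>\<omega>. (a j \<omega>)\<^sup>2)))" for n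
  proof (induction n)
    case 0
    have "e 0 \<omega> = 0" for \<omega> unfolding e_def Y_def Xs_def nrm_def sqnorm_def by simp
    then show ?case by simp
  next
    case (Suc n)
    have m1: "integrable M (\<lambda>\<omega>. (e (Suc n) \<omega>)\<^sup>2)"
      and m2: "sqrt (integral\<^sup>L M (\<lambda>\<omega>. (e (Suc n) \<omega>)\<^sup>2))
        \<le> sqrt (integral\<^sup>L M (\<lambda>\<omega>. (e n \<omega>)\<^sup>2)) + sqrt (integral\<^sup>L M (\<lambda>\<omega>. (a n \<omega>)\<^sup>2))"
      using mink[OF Me[of n] Ma[of n] Me[of "Suc n"]] S2 Suc.IH Ia[of n]
      by (auto simp: e_def a_def nrm_nonneg)
    show ?case using m1 m2 Suc.IH by simp
  qed
  define h where "h \<omega> = nrm (N m) (\<lambda>k. A m (Y m \<omega>) k - c m k)" for \<omega>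
  have Mh: "h \<in> borel_measurable M"
    unfolding h_def A_def
    by (rule meas_nrm[where Z="\<lambda>\<omega> k. block_avg (N m) (P m) (Y m \<omega>) k - c m k"])
       (use MY in \<open>auto intro!: borel_measurable_diff meas_avg[OF Ppart]\<close>)
  have "sqrt (integral\<^sup>L M (\<lambda>\<omega>. (h \<omega>)\<^sup>2))
      \<le> sqrt (integral\<^sup>L M (\<lambda>\<omega>. (e m \<omega>)\<^sup>2)) + sqrt (integral\<^sup>L M (\<lambda>\<omega>. (a m \<omega>)\<^sup>2))"
    using mink(2)[OF Me[of m] Ma[of m] Mh] S1 E[of m] Ia[of m]
    by (auto simp: e_def a_def h_def nrm_nonneg)
  also have "\<dots> \<le> (\<Sum>j\<le>m. sqrt (integral\<^sup>L M (\<lambda>\<omega>. (a j \<omega>)\<^sup>2)))"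
    using E[of m] by (simp add: lessThan_Suc_atMost[symmetric])
  finally have F: "sqrt (integral\<^sup>L M (\<lambda>\<omega>. (h \<omega>)\<^sup>2)) \<le> (\<Sum>j\<le>m. sqrt (integral\<^sup>L M (\<lambda>\<omega>. (a j \<omega>)\<^sup>2)))" .
  have "integral\<^sup>L M (\<lambda>\<omega>. (h \<omega>)\<^sup>2) = (sqrt (integral\<^sup>L M (\<lambda>\<omega>. (h \<omega>)\<^sup>2)))\<^sup>2" by simp
  also have "\<dots> \<le> (\<Sum>j\<le>m. sqrt (integral\<^sup>L M (\<lambda>\<omega>. (a j \<omega>)\<^sup>2)))\<^sup>2"
    by (rule power_mono[OF F]) simp
  finally show ?thesis
    unfolding h_def a_def nrm_sq A_def c_def Xs_def Y_def .
qed


end
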